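(* Let $X\in\mathbb{R}^{m\times n}$, $\lambda>0$, and let $f:\mathbb{R}^{m\times n}\to\mathbb{R}$ be an arbitrary function. Consider the original R-PCA problem $$\min_{A,E\in\mathbb{R}^{m\times n}} \operatorname{rank}(A)+\lambda f(E)\quad\text{s.t.}\quad X=A+E, \tag{P}$$ and the original R-LRR problem $$\min_{Z\in\mathbb{R}^{n\times n},\,E\in\mathbb{R}^{m\times n}} \operatorname{rank}(Z)+\lambda f(E)\quad\text{s.t.}\quad X-E=(X-E)Z. \tag{Q}$$ (i) Let $(A^*,E^* )$ be any minimizer of (P) and let $A^*=U_{A^*}\Sigma_{A^*}V_{A^*}^T$ be its skinny SVD. Then for every matrix $S\in\mathbb{R}^{n\times \operatorname{rank}(A^* )}$ with $V_{A^*}^TS=0$, the pair $\big((A^* )^\dagger A^*+SV_{A^*}^T,\;E^*\big)$ is an optimal solution of (Q). (ii) Conversely, if $(Z^*,E^* )$ is an optimal solution of (Q), then $(X-E^*,E^* )$ is a minimizer of (P).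
   Context: $M^\dagger$ denotes the Moore–Penrose pseudo-inverse of $M$. The skinny SVD of a matrix $A$ of rank $r$ is $A=U_A\Sigma_AV_A^T$ with $U_A,V_A$ having $r$ orthonormal columns and $\Sigma_A$ an $r\times r$ diagonal matrix with positive diagonal entries. *)

theory Defs
  imports "Jordan_Normal_Form.DL_Rank"
begin

definition mrank :: "real mat \<Rightarrow> nat" where
  "mrank A = vec_space.rank (dim_row A) A"

definition is_pinv :: "real mat \<Rightarrow> real mat \<Rightarrow> bool" where
  "is_pinv A B \<longleftrightarrow> B \<in> carrier_mat (dim_col A) (dim_row A) \<and>
     A * B * A = A \<and> B * A * B = B \<and>
     transpose_mat (A * B) = A * B \<and> transpose_mat (B * A) = B * A"

definition pinv :: "real mat \<Rightarrow> real mat" where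
  "pinv A = (THE B. is_pinv A B)"

definition skinny_svd :: "nat \<Rightarrow> nat \<Rightarrow> real mat \<Rightarrow> real mat \<Rightarrow> real mat \<Rightarrow> real mat \<Rightarrow> bool" where
  "skinny_svd m n A U Sg V \<longleftrightarrow> (let r = mrank A in
     U \<in> carrier_mat m r \<and> Sg \<in> carrier_mat r r \<and> V \<in> carrier_mat n r \<and>
     transpose_mat U * U = 1\<^sub>m r \<and> transpose_mat V * V = 1\<^sub>m r \<and>
     (\<forall>i<r. \<forall>j<r. i \<noteq> j \<longrightarrow> Sg $$ (i, j) = 0) \<and> (\<forall>i<r. Sg $$ (i, i) > 0) \<and>
     A = U * Sg * transpose_mat V)"

definition rpca_feasible :: "nat \<Rightarrow> nat \<Rightarrow> real mat \<Rightarrow> real mat \<Rightarrow> real mat \<Rightarrow> bool" where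
  "rpca_feasible m n X A E \<longleftrightarrow> A \<in> carrier_mat m n \<and> E \<in> carrier_mat m n \<and> X = A + E"

definition rpca_opt :: "nat \<Rightarrow> nat \<Rightarrow> real mat \<Rightarrow> real \<Rightarrow> (real mat \<Rightarrow> real) \<Rightarrow> real mat \<Rightarrow> real mat \<Rightarrow> bool" where
  "rpca_opt m n X lam f A E \<longleftrightarrow> rpca_feasible m n X A E \<and>
     (\<forall>A' E'. rpca_feasible m n X A' E' \<longrightarrow>
        real (mrank A) + lam * f E \<le> real (mrank A') + lam * f E')"

definition rlrr_feasible :: "nat \<Rightarrow> nat \<Rightarrow> real mat \<Rightarrow> real mat \<Rightarrow> real mat \<Rightarrow> bool" where
  "rlrr_feasible m n X Z E \<longleftrightarrow> Z \<in> carrier_mat n n \<and> E \<in> carrier_mat m n \<and> X - E = (X - E) * Z"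

definition rlrr_opt :: "nat \<Rightarrow> nat \<Rightarrow> real mat \<Rightarrow> real \<Rightarrow> (real mat \<Rightarrow> real) \<Rightarrow> real mat \<Rightarrow> real mat \<Rightarrow> bool" where
  "rlrr_opt m n X lam f Z E \<longleftrightarrow> rlrr_feasible m n X Z E \<and>
     (\<forall>Z' E'. rlrr_feasible m n X Z' E' \<longrightarrow>
        real (mrank Z) + lam * f E \<le> real (mrank Z') + lam * f E')"

end

theory Submission
  imports Defs
begin

lemma mult_unit_vec_col:
  assumes "(A :: 'a :: field mat) \<in> carrier_mat n a" "j < a"
  shows "A *\<^sub>v unit_vec a j = col A j"
  proof (rule eq_vecI)
  fix i assume "i < dim_vec (col A j)"
  hence i: "i < n" using assms by simp
  have "(A *\<^sub>v unit_vec a j) $ i = row A i \<bullet> unit_vec a j" using i assms by simp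
  also have "\<dots> = row A i $ j" by (rule scalar_prod_right_unit) (use assms in simp)
  finally show "(A *\<^sub>v unit_vec a j) $ i = col A j $ i" using i assms by simp
qed (use assms in simp)

context vec_space begin

lemma span_mat_ex:
  assumes "set ts \<subseteq> carrier_vec n" "v \<in> span (set ts)"
  shows "\<exists>c. v = mat_of_cols n ts *\<^sub>v vec (length ts) c"
proof -
  have "v \<in> span_list ts" using span_list_as_span[OF assms(1)] assms(2) by simp
  then obtain c where "v = lincomb_list c ts" unfolding span_list_def by auto
  moreover have "\<forall>w\<in>set ts. dim_vec w = n" using assms(1) by auto
  ultimately show ?thesis using lincomb_list_as_mat_mult by auto
qed

lemma mult_in_span:
  assumes "B \<in> carrier_mat n k" "w \<in> carrier_vec k"
  shows "B *\<^sub>v w \<in> span (set (cols B))"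
proof -
  have cs: "set (cols B) \<subseteq> carrier_vec n" using assms(1) cols_dim by blast
  have "\<forall>x\<in>set (cols B). dim_vec x = n" using cs by auto
  hence "lincomb_list (\<lambda>i. w $ i) (cols B) = mat_of_cols n (cols B) *\<^sub>v vec (length (cols B)) (\<lambda>i. w $ i)"
    using lincomb_list_as_mat_mult by blast
  also have "\<dots> = B *\<^sub>v w"
  proof -
    have e1: "vec (length (cols B)) (\<lambda>i. w $ i) = w" using assms by (intro eq_vecI) auto
    have e2: "mat_of_cols n (cols B) = B" using assms(1) mat_of_cols_cols[of B] by auto
    show ?thesis by (simp only: e1 e2)
  qed
  finally have "B *\<^sub>v w = lincomb_list (\<lambda>i. w $ i) (cols B)" by simp
  hence "B *\<^sub>v w \<in> span_list (cols B)" unfolding span_list_def by auto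
  thus ?thesis using span_list_as_span[OF cs] by simp
qed

lemma rank_le_span:
  assumes A: "A \<in> carrier_mat n a" and B: "B \<in> carrier_mat n b"
    and sub: "set (cols A) \<subseteq> span (set (cols B))"
  shows "rank A \<le> rank B"
proof -
  obtain S where S: "maximal S (\<lambda>T. T \<subseteq> set (cols A) \<and> lin_indpt T)"
    using maximal_exists[of "(\<lambda>T. T \<subseteq> set (cols A) \<and> lin_indpt T)" "card (set (cols A))" "{}"]
    by (meson List.finite_set card_mono empty_iff empty_subsetI finite_lin_indpt2 rev_finite_subset)
  have rA: "rank A = card S" using rank_card_indpt[OF A S] .
  have SA: "S \<subseteq> set (cols A)" "lin_indpt S" using S unfolding maximal_def by auto
  define W where "W = span (set (cols B))"
  have cs: "set (cols B) \<subseteq> carrier_vec n" using B cols_dim by blast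
  have sm: "submodule class_ring W V" unfolding W_def using cs span_is_submodule by simp
  have vsW: "vectorspace class_ring (vs W)"
    unfolding W_def using cs span_is_subspace subspace_def subspace_is_vs by simp
  have fd: "vectorspace.fin_dim class_ring (vs W)" unfolding W_def using fin_dim_span_cols[OF B] .
  have SW: "S \<subseteq> W" using SA sub W_def by auto
  have li: "\<not> module.lin_dep class_ring (vs W) S"
    using module.span_li_not_depend(2)[OF conjunct1[OF vec_vs[unfolded vectorspace_def]] SW sm] SA(2) by simp
  have "card S \<le> vectorspace.dim class_ring (vs W)"
    using vectorspace.li_le_dim(2)[OF vsW fd _ li] SW by simp
  hence "card S \<le> rank B" unfolding rank_def W_def .
  thus ?thesis using rA by simp
qed

lemma rank_mult_le_left:
  assumes B: "B \<in> carrier_mat n b" and C: "C \<in> carrier_mat b c"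
  shows "rank (B * C) \<le> rank B"
proof (rule rank_le_span[OF _ B])
  show "B * C \<in> carrier_mat n c" using B C by simp
  show "set (cols (B * C)) \<subseteq> span (set (cols B))"
  proof
    fix v assume "v \<in> set (cols (B * C))"
    then obtain j where j: "j < c" "v = col (B * C) j" using B C unfolding cols_def by auto
    have "v = B *\<^sub>v col C j" using j(2) col_mult2[OF B C j(1)] by (simp only:)
    thus "v \<in> span (set (cols B))" using mult_in_span[OF B] C j by simp
  qed
qed


lemma rank_factor:
  assumes A: "A \<in> carrier_mat n a"
  shows "\<exists>P C. P \<in> carrier_mat a (rank A) \<and> C \<in> carrier_mat (rank A) a \<and> A * P * C = A"
proof -
  obtain S where S: "maximal S (\<lambda>T. T \<subseteq> set (cols A) \<and> lin_indpt T)"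
    using maximal_exists[of "(\<lambda>T. T \<subseteq> set (cols A) \<and> lin_indpt T)" "card (set (cols A))" "{}"]
    by (meson List.finite_set card_mono empty_iff empty_subsetI finite_lin_indpt2 rev_finite_subset)
  have rA: "rank A = card S" using rank_card_indpt[OF A S] .
  have SA: "S \<subseteq> set (cols A)" "lin_indpt S" using S unfolding maximal_def by auto
  have fS: "finite S" using SA(1) finite_subset by blast
  obtain ts where ts: "set ts = S" "distinct ts" using finite_distinct_list[OF fS] by blast
  define r where "r = rank A"
  have lts: "length ts = r" using ts rA r_def distinct_card by metis
  have cA: "set (cols A) \<subseteq> carrier_vec n" using A cols_dim by blast
  have tsc: "set ts \<subseteq> carrier_vec n" using ts SA cA by auto
  define idx where "idx = (\<lambda>t. SOME j. j < a \<and> col A j = t)"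
  have idx: "idx t < a \<and> col A (idx t) = t" if "t \<in> S" for t
  proof -
    have "t \<in> set (cols A)" using that SA by auto
    then obtain j where "j < a" "col A j = t" using A unfolding cols_def by auto
    thus ?thesis unfolding idx_def by (intro someI[of "\<lambda>j. j < a \<and> col A j = t"]) simp
  qed
  define P :: "'a mat" where "P = mat a r (\<lambda>(i,k). if i = idx (ts ! k) then 1 else 0)"
  have P: "P \<in> carrier_mat a r" unfolding P_def by simp
  have AP: "A * P = mat_of_cols n ts"
  proof (rule mat_col_eqI)
    fix k assume "k < dim_col (mat_of_cols n ts)"
    hence k: "k < r" using lts by simp
    have tk: "ts ! k \<in> S" using ts k lts by auto
    have "col P k = unit_vec a (idx (ts ! k))"
      unfolding P_def using k idx[OF tk] by (intro eq_vecI) auto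
    hence "col (A * P) k = A *\<^sub>v unit_vec a (idx (ts ! k))" using col_mult2[OF A P k] by (simp only:)
    also have "\<dots> = ts ! k" using mult_unit_vec_col[OF A] idx[OF tk] by simp
    also have "\<dots> = col (mat_of_cols n ts) k" using k lts tsc
      by (metis col_mat_of_cols carrier_vecD nth_mem subsetD)
    finally show "col (A * P) k = col (mat_of_cols n ts) k" .
  qed (use A P lts in auto)
  have inspan: "col A j \<in> span S" if j: "j < a" for j
  proof (rule ccontr)
    assume ns: "col A j \<notin> span S"
    have cj: "col A j \<in> set (cols A)" using A j unfolding cols_def by auto
    have SC: "S \<subseteq> carrier_vec n" using SA cA by auto
    have nin: "col A j \<notin> S" using ns SC in_own_span by auto
    have "\<not> lin_dep (S \<union> {col A j})"
      using vectorspace.lin_dep_iff_in_span[OF vec_vs _ SA(2) _ nin] SC ns cj cA by auto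
    hence "S \<union> {col A j} \<subseteq> set (cols A) \<and> lin_indpt (S \<union> {col A j})" using SA cj by auto
    hence "S \<union> {col A j} = S" using S unfolding maximal_def by blast
    thus False using nin by auto
  qed
  have "\<exists>c. col A j = mat_of_cols n ts *\<^sub>v vec r c" if "j < a" for j
    using span_mat_ex[OF tsc] inspan[OF that] ts lts by auto
  then obtain cf where cf: "\<And>j. j < a \<Longrightarrow> col A j = mat_of_cols n ts *\<^sub>v vec r (cf j)" by metis
  define C where "C = mat r a (\<lambda>(k,j). cf j k)"
  have C: "C \<in> carrier_mat r a" unfolding C_def by simp
  have "A * P * C = A"
  proof (rule mat_col_eqI)
    fix j assume "j < dim_col A"
    hence j: "j < a" using A by simp
    have "col C j = vec r (cf j)" unfolding C_def using j by (intro eq_vecI) auto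
    have "col (A * P * C) j = col (mat_of_cols n ts * C) j" using AP by simp
    also have "\<dots> = mat_of_cols n ts *\<^sub>v col C j"
      by (rule col_mult2[of _ n r C a j]) (use lts C j in auto)
    finally have "col (A * P * C) j = mat_of_cols n ts *\<^sub>v vec r (cf j)" using \<open>col C j = vec r (cf j)\<close> by simp
    thus "col (A * P * C) j = col A j" using cf[OF j] by simp
  qed (use A P C in auto)
  thus ?thesis using P C r_def by blast
qed

end

lemma rank_mult_le_right:
  assumes B: "(B :: 'a :: field mat) \<in> carrier_mat m n" and Z: "Z \<in> carrier_mat n p"
  shows "vec_space.rank m (B * Z) \<le> vec_space.rank n Z"
proof -
  obtain P C where P: "P \<in> carrier_mat p (vec_space.rank n Z)"
    and C: "C \<in> carrier_mat (vec_space.rank n Z) p" and e: "Z * P * C = Z"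
    using vec_space.rank_factor[OF Z] by blast
  have BZ: "B * Z \<in> carrier_mat m p" using B Z by simp
  have PC: "P * C \<in> carrier_mat p p" using P C by simp
  have "(B * Z * P) * C = (B * Z) * (P * C)" using assoc_mult_mat[OF BZ P C] .
  also have "\<dots> = B * (Z * (P * C))" using assoc_mult_mat[OF B Z PC] .
  also have "Z * (P * C) = Z" using assoc_mult_mat[OF Z P C] e by simp
  finally have "B * Z = (B * Z * P) * C" by simp
  hence "vec_space.rank m (B * Z) = vec_space.rank m ((B * Z * P) * C)" by simp
  also have "\<dots> \<le> vec_space.rank m (B * Z * P)"
    using vec_space.rank_mult_le_left[OF _ C] B Z P by (meson mult_carrier_mat)
  also have "\<dots> \<le> vec_space.rank n Z"
    using vec_space.rank_le_nc B Z P by (meson mult_carrier_mat)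
  finally show ?thesis .
qed


lemma pinv_AB_eq:
  assumes A: "A \<in> carrier_mat m n" and B: "is_pinv A B" and C: "is_pinv A C"
  shows "A * B = A * C"
proof -
  have Bc: "B \<in> carrier_mat n m" and Cc: "C \<in> carrier_mat n m"
    using A B C unfolding is_pinv_def by auto
  have B3: "transpose_mat (A * B) = A * B" and B1: "A * B * A = A" using B unfolding is_pinv_def by auto
  have C3: "transpose_mat (A * C) = A * C" and C1: "A * C * A = A" using C unfolding is_pinv_def by auto
  have AC: "A * C \<in> carrier_mat m m" using A Cc by simp
  have tA: "transpose_mat A = transpose_mat A * (A * C)"
  proof -
    have "transpose_mat A = transpose_mat (A * C * A)" using C1 by simp
    also have "\<dots> = transpose_mat A * transpose_mat (A * C)" using transpose_mult[OF AC A] .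
    finally show ?thesis using C3 by simp
  qed
  have "A * B = transpose_mat B * transpose_mat A" using B3 transpose_mult[OF A Bc] by simp
  also have "\<dots> = transpose_mat B * (transpose_mat A * (A * C))" using tA by simp
  also have "\<dots> = (transpose_mat B * transpose_mat A) * (A * C)"
    using assoc_mult_mat[of "transpose_mat B" m n "transpose_mat A" m "A * C" m] Bc A AC by simp
  also have "transpose_mat B * transpose_mat A = A * B" using B3 transpose_mult[OF A Bc] by simp
  also have "A * B * (A * C) = A * B * A * C"
    using assoc_mult_mat[of "A * B" m m A n C m] A Bc Cc by simp
  also have "\<dots> = A * C" using B1 by simp
  finally show ?thesis .
qed

lemma pinv_BA_eq:
  assumes A: "A \<in> carrier_mat m n" and B: "is_pinv A B" and C: "is_pinv A C"
  shows "B * A = C * A"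
proof -
  have Bc: "B \<in> carrier_mat n m" and Cc: "C \<in> carrier_mat n m"
    using A B C unfolding is_pinv_def by auto
  have B4: "transpose_mat (B * A) = B * A" and B1: "A * B * A = A" using B unfolding is_pinv_def by auto
  have C4: "transpose_mat (C * A) = C * A" and C1: "A * C * A = A" using C unfolding is_pinv_def by auto
  have CA: "C * A \<in> carrier_mat n n" using A Cc by simp
  have ACA: "A * (C * A) = A" using C1 assoc_mult_mat[OF A Cc A] by simp
  have tA: "transpose_mat A = (C * A) * transpose_mat A"
  proof -
    have "transpose_mat A = transpose_mat (A * (C * A))" using ACA by simp
    also have "\<dots> = transpose_mat (C * A) * transpose_mat A" using transpose_mult[OF A CA] .
    finally show ?thesis using C4 by simp
  qed
  have "B * A = transpose_mat A * transpose_mat B" using B4 transpose_mult[OF Bc A] by simp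
  also have "\<dots> = ((C * A) * transpose_mat A) * transpose_mat B" using tA by simp
  also have "\<dots> = (C * A) * (transpose_mat A * transpose_mat B)"
    using assoc_mult_mat[of "C * A" n n "transpose_mat A" m "transpose_mat B" n] Bc A CA by simp
  also have "transpose_mat A * transpose_mat B = B * A" using B4 transpose_mult[OF Bc A] by simp
  also have "C * A * (B * A) = C * (A * B * A)"
    using assoc_mult_mat[of C n m A n "B * A" n] assoc_mult_mat[OF A Bc A] A Bc Cc by simp
  also have "\<dots> = C * A" using B1 by simp
  finally show ?thesis .
qed

lemma pinv_unique:
  assumes B: "is_pinv A B" and C: "is_pinv A C"
  shows "B = C"
proof -
  define m n where "m = dim_row A" and "n = dim_col A"
  have A: "A \<in> carrier_mat m n" unfolding m_def n_def by auto
  have Bc: "B \<in> carrier_mat n m" and Cc: "C \<in> carrier_mat n m"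
    using A B C unfolding is_pinv_def m_def n_def by auto
  have B2: "B * A * B = B" using B unfolding is_pinv_def by auto
  have C2: "C * A * C = C" using C unfolding is_pinv_def by auto
  have "B = B * (A * B)" using B2 assoc_mult_mat[OF Bc A Bc] by simp
  also have "\<dots> = B * (A * C)" using pinv_AB_eq[OF A B C] by simp
  also have "\<dots> = (B * A) * C" using assoc_mult_mat[OF Bc A Cc] by simp
  also have "\<dots> = (C * A) * C" using pinv_BA_eq[OF A B C] by simp
  finally show ?thesis using C2 by simp
qed


lemma mid_id:
  assumes P: "P \<in> carrier_mat a k" and Q: "Q \<in> carrier_mat k c" and R: "R \<in> carrier_mat c k"
    and W: "W \<in> carrier_mat k b" and QR: "Q * R = 1\<^sub>m k"
  shows "P * Q * (R * W) = (P :: 'a :: field mat) * W"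
proof -
  have "P * Q * (R * W) = P * (Q * (R * W))" using assoc_mult_mat[OF P Q mult_carrier_mat[OF R W]] .
  also have "Q * (R * W) = (Q * R) * W" using assoc_mult_mat[OF Q R W] by simp
  finally show ?thesis using QR W by simp
qed

lemma svd_pinv:
  assumes A: "A \<in> carrier_mat m n" and svd: "skinny_svd m n A U Sg V"
  shows "is_pinv A (pinv A)"
proof -
  define r where "r = mrank A"
  have U: "U \<in> carrier_mat m r" and Sg: "Sg \<in> carrier_mat r r" and V: "V \<in> carrier_mat n r"
    and UU: "transpose_mat U * U = 1\<^sub>m r" and VV: "transpose_mat V * V = 1\<^sub>m r"
    and off: "\<forall>i<r. \<forall>j<r. i \<noteq> j \<longrightarrow> Sg $$ (i, j) = 0" and pos: "\<forall>i<r. Sg $$ (i, i) > 0"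
    and Aeq: "A = U * Sg * transpose_mat V"
    using svd unfolding skinny_svd_def r_def Let_def by auto
  have tU: "transpose_mat U \<in> carrier_mat r m" and tV: "transpose_mat V \<in> carrier_mat r n" using U V by auto
  define D :: "real mat" where "D = mat r r (\<lambda>(i,j). if i = j then 1 / Sg $$ (i,i) else 0)"
  have D: "D \<in> carrier_mat r r" unfolding D_def by simp
  have SD: "Sg * D = 1\<^sub>m r"
  proof (rule eq_matI)
    fix i j assume i: "i < dim_row (1\<^sub>m r)" and j: "j < dim_col (1\<^sub>m r)"
    have "(Sg * D) $$ (i, j) = (\<Sum>k\<in>{0..<r}. Sg $$ (i, k) * D $$ (k, j))"
      using i j Sg D by (simp add: scalar_prod_def)
    also have "\<dots> = (\<Sum>k\<in>{0..<r}. if k = j then Sg $$ (i, j) / Sg $$ (j,j) else 0)"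
      using j unfolding D_def by (intro sum.cong) auto
    also have "\<dots> = Sg $$ (i, j) / Sg $$ (j,j)" using j by simp
    also have "\<dots> = 1\<^sub>m r $$ (i, j)" using i j off pos by (cases "i = j") (auto simp: less_imp_neq[symmetric])
    finally show "(Sg * D) $$ (i, j) = 1\<^sub>m r $$ (i, j)" .
  qed (use Sg D in auto)
  have DS: "D * Sg = 1\<^sub>m r"
  proof (rule eq_matI)
    fix i j assume i: "i < dim_row (1\<^sub>m r)" and j: "j < dim_col (1\<^sub>m r)"
    have "(D * Sg) $$ (i, j) = (\<Sum>k\<in>{0..<r}. D $$ (i, k) * Sg $$ (k, j))"
      using i j Sg D by (simp add: scalar_prod_def)
    also have "\<dots> = (\<Sum>k\<in>{0..<r}. if k = i then Sg $$ (i, j) / Sg $$ (i,i) else 0)"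
      using i unfolding D_def by (intro sum.cong) auto
    also have "\<dots> = Sg $$ (i, j) / Sg $$ (i,i)" using i by simp
    also have "\<dots> = 1\<^sub>m r $$ (i, j)" using i j off pos by (cases "i = j") (auto simp: less_imp_neq[symmetric])
    finally show "(D * Sg) $$ (i, j) = 1\<^sub>m r $$ (i, j)" .
  qed (use Sg D in auto)
  define B where "B = V * (D * transpose_mat U)"
  have DtU: "D * transpose_mat U \<in> carrier_mat r m" using D tU by simp
  have StV: "Sg * transpose_mat V \<in> carrier_mat r n" using Sg tV by simp
  have US: "U * Sg \<in> carrier_mat m r" using U Sg by simp
  have VD: "V * D \<in> carrier_mat n r" using V D by simp
  have Bc: "B \<in> carrier_mat n m" unfolding B_def using V DtU by simp
  have A2: "A = U * (Sg * transpose_mat V)" using Aeq assoc_mult_mat[OF U Sg tV] by simp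
  have B2: "B = V * D * transpose_mat U" unfolding B_def using assoc_mult_mat[OF V D tU] by simp
  have AB: "A * B = U * transpose_mat U"
  proof -
    have "A * B = U * Sg * transpose_mat V * (V * (D * transpose_mat U))" using Aeq B_def by simp
    also have "\<dots> = U * Sg * (D * transpose_mat U)" by (rule mid_id[OF US tV V DtU VV])
    also have "\<dots> = U * transpose_mat U" by (rule mid_id[OF U Sg D tU SD])
    finally show ?thesis .
  qed
  have BA: "B * A = V * transpose_mat V"
  proof -
    have "B * A = V * D * transpose_mat U * (U * (Sg * transpose_mat V))" using A2 B2 by simp
    also have "\<dots> = V * D * (Sg * transpose_mat V)" by (rule mid_id[OF VD tU U StV UU])
    also have "\<dots> = V * transpose_mat V" by (rule mid_id[OF V D Sg tV DS])
    finally show ?thesis .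
  qed
  have ABA: "A * B * A = A"
  proof -
    have "A * B * A = U * transpose_mat U * (U * (Sg * transpose_mat V))" using AB A2 by simp
    also have "\<dots> = U * (Sg * transpose_mat V)" by (rule mid_id[OF U tU U StV UU])
    finally show ?thesis using A2 by simp
  qed
  have BAB: "B * A * B = B"
  proof -
    have "B * A * B = V * transpose_mat V * (V * (D * transpose_mat U))" using BA B_def by simp
    also have "\<dots> = V * (D * transpose_mat U)" by (rule mid_id[OF V tV V DtU VV])
    finally show ?thesis using B_def by simp
  qed
  have T1: "transpose_mat (A * B) = A * B" unfolding AB using transpose_mult[OF U tU] by simp
  have T2: "transpose_mat (B * A) = B * A" unfolding BA using transpose_mult[OF V tV] by simp
  have pB: "is_pinv A B" unfolding is_pinv_def using Bc A ABA BAB T1 T2 by auto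
  have "pinv A = B" unfolding pinv_def using pB pinv_unique by blast
  thus ?thesis using pB by simp
qed

lemma add_minus_cancel_mat:
  assumes "A \<in> carrier_mat m n" "E \<in> carrier_mat m n"
  shows "A + E - E = (A :: real mat)" "A - E + E = A"
  using assms by (auto intro!: eq_matI)

lemma part_ii:
  assumes X: "X \<in> carrier_mat m n" and opt: "rlrr_opt m n X lam f Z E"
  shows "rpca_opt m n X lam f (X - E) E"
proof -
  have Z: "Z \<in> carrier_mat n n" and E: "E \<in> carrier_mat m n" and fe: "X - E = (X - E) * Z"
    and mn: "\<And>Z' E'. rlrr_feasible m n X Z' E' \<Longrightarrow> real (mrank Z) + lam * f E \<le> real (mrank Z') + lam * f E'"
    using opt unfolding rlrr_opt_def rlrr_feasible_def by auto
  have XE: "X - E \<in> carrier_mat m n" using minus_carrier_mat[OF E] .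
  have feas: "rpca_feasible m n X (X - E) E"
    unfolding rpca_feasible_def using XE E add_minus_cancel_mat(2)[OF X E] by simp
  have rXE: "mrank (X - E) \<le> mrank Z"
  proof -
    have "mrank (X - E) = vec_space.rank m ((X - E) * Z)" unfolding mrank_def using XE E fe[symmetric] by simp
    also have "\<dots> \<le> vec_space.rank n Z" by (rule rank_mult_le_right[OF XE Z])
    finally show ?thesis unfolding mrank_def using Z by simp
  qed
  show ?thesis unfolding rpca_opt_def
  proof (intro conjI allI impI feas)
    fix A' E' assume f': "rpca_feasible m n X A' E'"
    hence A': "A' \<in> carrier_mat m n" and E': "E' \<in> carrier_mat m n" and XA: "X = A' + E'"
      unfolding rpca_feasible_def by auto
    obtain P C where P: "P \<in> carrier_mat n (vec_space.rank m A')"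
      and C: "C \<in> carrier_mat (vec_space.rank m A') n" and e: "A' * P * C = A'"
      using vec_space.rank_factor[OF A'] by blast
    have XE': "X - E' = A'" using XA add_minus_cancel_mat(1)[OF A' E'] by simp
    have PC: "P * C \<in> carrier_mat n n" using P C by simp
    have "rlrr_feasible m n X (P * C) E'"
      unfolding rlrr_feasible_def using PC E' XE' e assoc_mult_mat[OF A' P C] by simp
    hence 1: "real (mrank Z) + lam * f E \<le> real (mrank (P * C)) + lam * f E'" by (rule mn)
    have "mrank (P * C) = vec_space.rank n (P * C)" unfolding mrank_def using P by simp
    also have "\<dots> \<le> vec_space.rank n P" by (rule vec_space.rank_mult_le_left[OF P C])
    also have "\<dots> \<le> vec_space.rank m A'" by (rule vec_space.rank_le_nc[OF P])
    also have "\<dots> = mrank A'" unfolding mrank_def using A' by simp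
    finally have 2: "mrank (P * C) \<le> mrank A'" .
    show "real (mrank (X - E)) + lam * f E \<le> real (mrank A') + lam * f E'"
      using 1 2 rXE by linarith
  qed
qed

lemma part_i:
  assumes X: "X \<in> carrier_mat m n" and opt: "rpca_opt m n X lam f A E"
    and svd: "skinny_svd m n A U Sg V" and S: "S \<in> carrier_mat n (mrank A)"
    and VS: "transpose_mat V * S = 0\<^sub>m (mrank A) (mrank A)"
  shows "rlrr_opt m n X lam f (pinv A * A + S * transpose_mat V) E"
proof -
  define r where "r = mrank A"
  have A: "A \<in> carrier_mat m n" and E: "E \<in> carrier_mat m n" and XAE: "X = A + E"
    and mn: "\<And>A' E'. rpca_feasible m n X A' E' \<Longrightarrow> real (mrank A) + lam * f E \<le> real (mrank A') + lam * f E'"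
    using opt unfolding rpca_opt_def rpca_feasible_def by auto
  have U: "U \<in> carrier_mat m r" and Sg: "Sg \<in> carrier_mat r r" and V: "V \<in> carrier_mat n r"
    and Aeq: "A = U * Sg * transpose_mat V"
    using svd unfolding skinny_svd_def r_def Let_def by auto
  have S: "S \<in> carrier_mat n r" and VS: "transpose_mat V * S = 0\<^sub>m r r" using S VS r_def by auto
  have tV: "transpose_mat V \<in> carrier_mat r n" using V by simp
  have US: "U * Sg \<in> carrier_mat m r" using U Sg by simp
  have pA: "is_pinv A (pinv A)" by (rule svd_pinv[OF A svd])
  have pAc: "pinv A \<in> carrier_mat n m" using pA A unfolding is_pinv_def by auto
  have ApA: "A * pinv A * A = A" using pA unfolding is_pinv_def by auto
  define Z where "Z = pinv A * A + S * transpose_mat V"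
  have W: "pinv A * (U * Sg) + S \<in> carrier_mat n r" using pAc US S by simp
  have Zeq: "Z = (pinv A * (U * Sg) + S) * transpose_mat V"
  proof -
    have h: "pinv A * A = pinv A * (U * Sg) * transpose_mat V"
      using Aeq assoc_mult_mat[OF pAc US tV] by simp
    have pU: "pinv A * (U * Sg) \<in> carrier_mat n r" using pAc US by simp
    show ?thesis unfolding Z_def h by (rule add_mult_distrib_mat[symmetric, OF pU S tV])
  qed
  have Zc: "Z \<in> carrier_mat n n" using Zeq W tV by simp
  have XE: "X - E = A" using XAE add_minus_cancel_mat(1)[OF A E] by simp
  have AS: "A * (S * transpose_mat V) = 0\<^sub>m m n"
  proof -
    have "A * (S * transpose_mat V) = U * Sg * (transpose_mat V * (S * transpose_mat V))"
      using Aeq assoc_mult_mat[OF US tV mult_carrier_mat[OF S tV]] by simp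
    also have "transpose_mat V * (S * transpose_mat V) = (transpose_mat V * S) * transpose_mat V"
      using assoc_mult_mat[OF tV S tV] by simp
    also have "\<dots> = 0\<^sub>m r n" using VS tV by simp
    finally show ?thesis using right_mult_zero_mat[OF US] by simp
  qed
  have AZ: "A * Z = A"
  proof -
    have "A * Z = A * (pinv A * A) + A * (S * transpose_mat V)"
      unfolding Z_def using mult_add_distrib_mat[of A m n "pinv A * A" n "S * transpose_mat V"] A pAc S tV
      by simp
    also have "A * (pinv A * A) = A" using ApA assoc_mult_mat[OF A pAc A] by simp
    finally show ?thesis using AS A by simp
  qed
  have feas: "rlrr_feasible m n X Z E" unfolding rlrr_feasible_def using Zc E XE AZ by simp
  have rZ: "mrank Z \<le> r"
  proof -
    have "mrank Z = vec_space.rank n Z" unfolding mrank_def using Zc by simp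
    also have "\<dots> \<le> vec_space.rank n (pinv A * (U * Sg) + S)"
      unfolding Zeq by (rule vec_space.rank_mult_le_left[OF W tV])
    also have "\<dots> \<le> r" by (rule vec_space.rank_le_nc[OF W])
    finally show ?thesis .
  qed
  show ?thesis unfolding Z_def[symmetric] rlrr_opt_def
  proof (intro conjI allI impI feas)
    fix Z' E' assume f': "rlrr_feasible m n X Z' E'"
    hence Z': "Z' \<in> carrier_mat n n" and E': "E' \<in> carrier_mat m n" and fe: "X - E' = (X - E') * Z'"
      unfolding rlrr_feasible_def by auto
    have XE': "X - E' \<in> carrier_mat m n" using minus_carrier_mat[OF E'] .
    have "rpca_feasible m n X (X - E') E'"
      unfolding rpca_feasible_def using XE' E' add_minus_cancel_mat(2)[OF X E'] by simp
    hence 1: "real (mrank A) + lam * f E \<le> real (mrank (X - E')) + lam * f E'" by (rule mn)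
    have "mrank (X - E') = vec_space.rank m ((X - E') * Z')" unfolding mrank_def using XE' E' fe[symmetric] by simp
    also have "\<dots> \<le> vec_space.rank n Z'" by (rule rank_mult_le_right[OF XE' Z'])
    also have "\<dots> = mrank Z'" unfolding mrank_def using Z' by simp
    finally have 2: "mrank (X - E') \<le> mrank Z'" .
    show "real (mrank Z) + lam * f E \<le> real (mrank Z') + lam * f E'"
      using 1 2 rZ r_def by linarith
  qed
qed

theorem theorem1:
  fixes m n :: nat and X :: "real mat" and lam :: real and f :: "real mat \<Rightarrow> real"
  assumes "X \<in> carrier_mat m n" and "lam > 0"
  shows "(\<forall>A E U Sg V S. rpca_opt m n X lam f A E \<and> skinny_svd m n A U Sg V \<and>
            S \<in> carrier_mat n (mrank A) \<and>
            transpose_mat V * S = 0\<^sub>m (mrank A) (mrank A) \<longrightarrow>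
            rlrr_opt m n X lam f (pinv A * A + S * transpose_mat V) E)
       \<and> (\<forall>Z E. rlrr_opt m n X lam f Z E \<longrightarrow> rpca_opt m n X lam f (X - E) E)"
  using part_i[OF assms(1)] part_ii[OF assms(1)] by blast

end
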